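(* Consider the scalar linear system $$\frac{dx(t)}{dt} = A\,x(t) + B_p\,p(t) + B_d\,d(t),\qquad t\in\mathcal{T}=[0,t_f],$$ with scalar constants $A\le 0$ and $B_p\ge 0$, a given disturbance $d$ and a given initial state $x(0)=x_0$. Fix bounds $0\le p_{\min}\le p_{\max}$ and $x_{\min}\le x_{\max}$. Let $p_+$ and $p_-$ be feasible power trajectories: $p_{\min}\le p_\pm(t)\le p_{\max}$ for all $t\in\mathcal{T}$, and the resulting states $x_\pm$ (same $x_0$ and $d$) satisfy $x_{\min}\le x_\pm(t)\le x_{\max}$ for all $t\in\mathcal{T}$. Let $p_a$ be a power trajectory with $p_{\min}\le p_a(t)\le p_{\max}$ for all $t$, and let $x_a$ be the resulting state (same $x_0$ and $d$). If for all $t\in\mathcal{T}$ $$\mathrm{E}^{\mathrm{TI}}_{\mathrm{down}}(t):=\int_0^t e^{-A\tau}p_-(\tau)\,d\tau \;\le\; \int_0^t p_a(\tau)\,d\tau \;\le\; \int_0^t e^{A(t-\tau)}p_+(\tau)\,d\tau =: \mathrm{E}^{\mathrm{TI}}_{\mathrm{up}}(t),$$ then $x_{\min}\le x_a(t)\le x_{\max}$ for all $t\in\mathcal{T}$; that is, $\mathrm{E}^{\mathrm{TI}}_{\mathrm{up}}$ and $\mathrm{E}^{\mathrm{TI}}_{\mathrm{down}}$ are trajectory-independent energy flexibility bounds.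
   Context: All power trajectories are (integrable) functions on $\mathcal{T}$; states are the solutions $x(t)=e^{At}x_0+\int_0^t e^{A(t-\tau)}(B_d d(\tau)+B_p p(\tau))\,d\tau$ of the state equation. "Trajectory-independent (TI) energy bounds" means: every power trajectory satisfying the power constraints whose cumulative energy $\int_0^t p$ lies between the bounds for all $t$ satisfies the state constraints. *)

theory Defs
  imports "HOL-Analysis.Analysis"
begin

text \<open>State of the scalar system dx/dt = A x + B_p p + B_d d with x(0) = x0,
  given by the variation-of-constants formula.\<close>
definition state ::
  "real \<Rightarrow> real \<Rightarrow> real \<Rightarrow> real \<Rightarrow> (real \<Rightarrow> real) \<Rightarrow> (real \<Rightarrow> real) \<Rightarrow> real \<Rightarrow> real" where
  "state A Bp Bd x0 d p t =
     exp (A * t) * x0 + integral {0..t} (\<lambda>\<tau>. exp (A * (t - \<tau>)) * (Bd * d \<tau> + Bp * p \<tau>))"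

definition energy :: "(real \<Rightarrow> real) \<Rightarrow> real \<Rightarrow> real" where
  "energy p t = integral {0..t} p"

definition E_TI_up :: "real \<Rightarrow> (real \<Rightarrow> real) \<Rightarrow> real \<Rightarrow> real" where
  "E_TI_up A pplus t = integral {0..t} (\<lambda>\<tau>. exp (A * (t - \<tau>)) * pplus \<tau>)"

definition E_TI_down :: "real \<Rightarrow> (real \<Rightarrow> real) \<Rightarrow> real \<Rightarrow> real" where
  "E_TI_down A pminus t = integral {0..t} (\<lambda>\<tau>. exp (- A * \<tau>) * pminus \<tau>)"

end

theory Submission
  imports Defs "HOL-Analysis.Analysis"
begin

lemma cont_mult_integrable:
  fixes f p :: "real \<Rightarrow> real"
  assumes "p integrable_on {0..tf}" "\<And>x. x \<in> {0..tf} \<Longrightarrow> 0 \<le> p x"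
    and "t \<in> {0..tf}" "continuous_on {0..t} f"
  shows "(\<lambda>x. f x * p x) integrable_on {0..t}"
proof -
  have pi: "p integrable_on {0..t}"
    using assms(3) by (intro integrable_on_subinterval[OF assms(1)]) auto
  have "p absolutely_integrable_on {0..t}"
    using pi assms(2,3) by (intro nonnegative_absolutely_integrable_1) auto
  moreover have "bounded (f ` {0..t})"
    using assms(4) by (intro compact_imp_bounded compact_continuous_image) auto
  moreover have "f \<in> borel_measurable (lebesgue_on {0..t})"
    using assms(4) by (intro continuous_imp_measurable_on_sets_lebesgue) auto
  ultimately have "(\<lambda>x. f x * p x) absolutely_integrable_on {0..t}"
    by (intro absolutely_integrable_bounded_measurable_product_real) auto
  then show ?thesis using absolutely_integrable_on_def by blast
qed

theorem theorem1:
  fixes A Bp Bd x0 tf pmin pmax xmin xmax :: real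
    and d pplus pminus pa :: "real \<Rightarrow> real"
  assumes tf: "0 \<le> tf"
    and A: "A \<le> 0" and Bp: "Bp \<ge> 0"
    and d_int: "d integrable_on {0..tf}"
    and p_bounds: "0 \<le> pmin" "pmin \<le> pmax"
    and x_bounds: "xmin \<le> xmax"
    and pplus_int: "pplus integrable_on {0..tf}"
    and pplus_p: "\<And>t. t \<in> {0..tf} \<Longrightarrow> pmin \<le> pplus t \<and> pplus t \<le> pmax"
    and pplus_x: "\<And>t. t \<in> {0..tf} \<Longrightarrow>
                    xmin \<le> state A Bp Bd x0 d pplus t \<and> state A Bp Bd x0 d pplus t \<le> xmax"
    and pminus_int: "pminus integrable_on {0..tf}"
    and pminus_p: "\<And>t. t \<in> {0..tf} \<Longrightarrow> pmin \<le> pminus t \<and> pminus t \<le> pmax"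
    and pminus_x: "\<And>t. t \<in> {0..tf} \<Longrightarrow>
                    xmin \<le> state A Bp Bd x0 d pminus t \<and> state A Bp Bd x0 d pminus t \<le> xmax"
    and pa_int: "pa integrable_on {0..tf}"
    and pa_p: "\<And>t. t \<in> {0..tf} \<Longrightarrow> pmin \<le> pa t \<and> pa t \<le> pmax"
    and energy_bounds: "\<And>t. t \<in> {0..tf} \<Longrightarrow>
                    E_TI_down A pminus t \<le> energy pa t \<and> energy pa t \<le> E_TI_up A pplus t"
  shows "\<forall>t \<in> {0..tf}. xmin \<le> state A Bp Bd x0 d pa t \<and> state A Bp Bd x0 d pa t \<le> xmax"
proof
  fix t assume t: "t \<in> {0..tf}"
  define e where "e = (\<lambda>\<tau>::real. exp (A * (t - \<tau>)))"
  have ce: "continuous_on {0..t} e" unfolding e_def by (intro continuous_intros)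
  have pa0: "\<And>x. x \<in> {0..tf} \<Longrightarrow> 0 \<le> pa x" using pa_p p_bounds by force
  have pp0: "\<And>x. x \<in> {0..tf} \<Longrightarrow> 0 \<le> pplus x" using pplus_p p_bounds by force
  have pm0: "\<And>x. x \<in> {0..tf} \<Longrightarrow> 0 \<le> pminus x" using pminus_p p_bounds by force
  have ia: "(\<lambda>x. e x * pa x) integrable_on {0..t}"
    by (rule cont_mult_integrable[OF pa_int pa0 t ce])
  have ip: "(\<lambda>x. e x * pplus x) integrable_on {0..t}"
    by (rule cont_mult_integrable[OF pplus_int pp0 t ce])
  have im: "(\<lambda>x. e x * pminus x) integrable_on {0..t}"
    by (rule cont_mult_integrable[OF pminus_int pm0 t ce])
  have im2: "(\<lambda>x. exp (- A * x) * pminus x) integrable_on {0..t}"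
    by (rule cont_mult_integrable[OF pminus_int pm0 t], assumption, intro continuous_intros)
  have pai: "pa integrable_on {0..t}"
    using t by (intro integrable_on_subinterval[OF pa_int]) auto
  have eb: "E_TI_down A pminus t \<le> energy pa t" "energy pa t \<le> E_TI_up A pplus t"
    using energy_bounds[OF t] by auto
  have up: "integral {0..t} (\<lambda>x. e x * pa x) \<le> integral {0..t} (\<lambda>x. e x * pplus x)"
  proof -
    have "integral {0..t} (\<lambda>x. e x * pa x) \<le> integral {0..t} pa"
    proof (rule integral_le[OF ia pai])
      fix x assume x: "x \<in> {0..t}"
      have "e x \<le> 1" unfolding e_def using A x by (simp add: mult_nonpos_nonneg)
      moreover have "0 \<le> pa x" using pa0 x t by auto
      ultimately show "e x * pa x \<le> pa x" using mult_right_mono[of "e x" 1 "pa x"] by simp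
    qed
    also have "\<dots> \<le> integral {0..t} (\<lambda>x. e x * pplus x)"
      using eb(2) unfolding energy_def E_TI_up_def e_def by simp
    finally show ?thesis .
  qed
  have down: "integral {0..t} (\<lambda>x. e x * pminus x) \<le> integral {0..t} (\<lambda>x. e x * pa x)"
  proof -
    have "integral {0..t} (\<lambda>x. e x * pminus x)
        = integral {0..t} (\<lambda>x. exp (A * t) * (exp (- A * x) * pminus x))"
      unfolding e_def by (rule integral_cong) (simp add: exp_add[symmetric] algebra_simps)
    also have "\<dots> = exp (A * t) * E_TI_down A pminus t"
      unfolding E_TI_down_def by simp
    also have "\<dots> \<le> exp (A * t) * energy pa t" using eb(1) by simp
    also have "\<dots> = integral {0..t} (\<lambda>x. exp (A * t) * pa x)"
      unfolding energy_def by simp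
    also have "\<dots> \<le> integral {0..t} (\<lambda>x. e x * pa x)"
    proof (rule integral_le)
      show "(\<lambda>x. exp (A * t) * pa x) integrable_on {0..t}"
        using integrable_cmul[OF pai, of "exp (A * t)"] by simp
      show "(\<lambda>x. e x * pa x) integrable_on {0..t}" by (rule ia)
      fix x assume x: "x \<in> {0..t}"
      have "exp (A * t) \<le> e x" unfolding e_def using A x
        by (simp add: algebra_simps mult_nonpos_nonneg)
      moreover have "0 \<le> pa x" using pa0 x t by auto
      ultimately show "exp (A * t) * pa x \<le> e x * pa x" by (simp add: mult_right_mono)
    qed
    finally show ?thesis .
  qed
  define g where "g = (\<lambda>x. e x * (Bd * d x))"
  have st: "state A Bp Bd x0 d q t = exp (A * t) * x0 +
      integral {0..t} (\<lambda>x. g x + Bp * (e x * q x))" for q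
    unfolding state_def g_def e_def by (simp add: algebra_simps)
  have hint: "(\<lambda>x. Bp * (e x * q x)) integrable_on {0..t}"
    if "(\<lambda>x. e x * q x) integrable_on {0..t}" for q
    using integrable_cmul[OF that, of Bp] by simp
  show "xmin \<le> state A Bp Bd x0 d pa t \<and> state A Bp Bd x0 d pa t \<le> xmax"
  proof (cases "g integrable_on {0..t}")
    case True
    have st2: "state A Bp Bd x0 d q t = exp (A * t) * x0 + integral {0..t} g
        + Bp * integral {0..t} (\<lambda>x. e x * q x)"
      if "(\<lambda>x. e x * q x) integrable_on {0..t}" for q
      unfolding st using integral_add[OF True hint[OF that]] by simp
    have "Bp * integral {0..t} (\<lambda>x. e x * pa x) \<le> Bp * integral {0..t} (\<lambda>x. e x * pplus x)"
      using up Bp by (rule mult_left_mono)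
    moreover have "Bp * integral {0..t} (\<lambda>x. e x * pminus x) \<le> Bp * integral {0..t} (\<lambda>x. e x * pa x)"
      using down Bp by (rule mult_left_mono)
    ultimately show ?thesis using st2[OF ia] st2[OF ip] st2[OF im] pplus_x[OF t] pminus_x[OF t]
      by linarith
  next
    case False
    have st3: "state A Bp Bd x0 d q t = exp (A * t) * x0"
      if "(\<lambda>x. e x * q x) integrable_on {0..t}" for q
    proof -
      have "\<not> (\<lambda>x. g x + Bp * (e x * q x)) integrable_on {0..t}"
      proof
        assume "(\<lambda>x. g x + Bp * (e x * q x)) integrable_on {0..t}"
        from integrable_diff[OF this hint[OF that]] have "g integrable_on {0..t}" by simp
        with False show False by simp
      qed
      then show ?thesis unfolding st by (simp add: not_integrable_integral)
    qed
    show ?thesis using st3[OF ia] st3[OF ip] pplus_x[OF t] st3[OF im] pminus_x[OF t] by simp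
  qed
qed

end
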